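(* Every poset $P$ embeds (as an ordered set) into the poset $AM_2(P(2))$.
   Context: For a poset $P$, $P(2)$ is the set $P\times\{0,1\}$ with the order: $(x,i)\leq(y,j)$ iff either ($i=j$ and $x\leq y$), or ($i=0$, $j=1$, and there exist incomparable elements $x',y'\in P$ with $x\leq x'$ and $y'\leq y$); this is a partial order. For a poset $Q$, $AM_2(Q)$ is the set of two-element maximal antichains of $Q$, ordered by domination: $X\leq Y$ iff for every $x\in X$ there is $y\in Y$ with $x\leq y$. An embedding is a map $e$ with $x\leq y\iff e(x)\leq e(y)$. *)

theory Defs
  imports Main
begin

definition incomp :: "'a set \<Rightarrow> 'a rel \<Rightarrow> 'a \<Rightarrow> 'a \<Rightarrow> bool" where
  "incomp A r x y \<longleftrightarrow> x \<in> A \<and> y \<in> A \<and> (x, y) \<notin> r \<and> (y, x) \<notin> r"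

definition P2_carrier :: "'a set \<Rightarrow> ('a \<times> nat) set" where
  "P2_carrier A = A \<times> {0, 1}"

definition P2_rel :: "'a set \<Rightarrow> 'a rel \<Rightarrow> ('a \<times> nat) rel" where
  "P2_rel A r = {((x, i), (y, j)). (x, i) \<in> P2_carrier A \<and> (y, j) \<in> P2_carrier A \<and>
      ((i = j \<and> (x, y) \<in> r) \<or>
       (i = 0 \<and> j = 1 \<and> (\<exists>x' y'. incomp A r x' y' \<and> (x, x') \<in> r \<and> (y', y) \<in> r)))}"

definition AM2 :: "'b set \<Rightarrow> 'b rel \<Rightarrow> 'b set set" where
  "AM2 B s = {X. X \<subseteq> B \<and> card X = 2 \<and>
      (\<forall>x\<in>X. \<forall>y\<in>X. x \<noteq> y \<longrightarrow> incomp B s x y) \<and>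
      (\<forall>z\<in>B - X. \<exists>x\<in>X. (z, x) \<in> s \<or> (x, z) \<in> s)}"

definition dominated :: "'b rel \<Rightarrow> 'b set \<Rightarrow> 'b set \<Rightarrow> bool" where
  "dominated s X Y \<longleftrightarrow> (\<forall>x\<in>X. \<exists>y\<in>Y. (x, y) \<in> s)"

end

theory Submission
  imports Defs
begin

lemma P2_ii: "((x, i), (y, i)) \<in> P2_rel A r \<longleftrightarrow> x \<in> A \<and> y \<in> A \<and> i \<in> {0,1} \<and> (x, y) \<in> r"
  unfolding P2_rel_def P2_carrier_def by auto

lemma P2_10: "((x, 1), (y, 0)) \<notin> P2_rel A r"
  unfolding P2_rel_def P2_carrier_def by auto

lemma P2_10': "((x, Suc 0), (y, 0)) \<notin> P2_rel A r"
  unfolding P2_rel_def P2_carrier_def by auto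

lemma P2_01: "((x, 0), (y, 1)) \<in> P2_rel A r \<longleftrightarrow> x \<in> A \<and> y \<in> A \<and>
   (\<exists>x' y'. incomp A r x' y' \<and> (x, x') \<in> r \<and> (y', y) \<in> r)"
  unfolding P2_rel_def P2_carrier_def by auto

theorem lemma6p2:
  fixes A :: "'a set" and r :: "'a rel"
  assumes "partial_order_on A r"
  shows "\<exists>e. (\<forall>x\<in>A. e x \<in> AM2 (P2_carrier A) (P2_rel A r)) \<and>
             (\<forall>x\<in>A. \<forall>y\<in>A. (x, y) \<in> r \<longleftrightarrow> dominated (P2_rel A r) (e x) (e y))"
proof -
  have refl: "refl_on A r" and tr: "trans r" and anti: "antisym r"
    using assms unfolding partial_order_on_def preorder_on_def by auto
  have rA: "(a, b) \<in> r \<Longrightarrow> a \<in> A \<and> b \<in> A" for a b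
    using partial_order_onD(4)[OF assms] by auto
  have rr: "a \<in> A \<Longrightarrow> (a, a) \<in> r" for a
    using refl unfolding refl_on_def by auto
  have trr: "(a, b) \<in> r \<Longrightarrow> (b, c) \<in> r \<Longrightarrow> (a, c) \<in> r" for a b c
    using tr unfolding trans_def by blast
  define e where "e x = {(x, 0::nat), (x, 1)}" for x :: 'a
  have no01: "((x, 0), (x, 1)) \<notin> P2_rel A r" for x
  proof
    assume "((x, 0), (x, 1)) \<in> P2_rel A r"
    then obtain x' y' where "incomp A r x' y'" "(x, x') \<in> r" "(y', x) \<in> r"
      unfolding P2_01 by blast
    then show False using trr unfolding incomp_def by blast
  qed
  have AM: "e x \<in> AM2 (P2_carrier A) (P2_rel A r)" if x: "x \<in> A" for x
  proof -
    have sub: "e x \<subseteq> P2_carrier A" using x unfolding e_def P2_carrier_def by auto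
    have c: "card (e x) = 2" unfolding e_def by simp
    have ac: "\<forall>u\<in>e x. \<forall>v\<in>e x. u \<noteq> v \<longrightarrow> incomp (P2_carrier A) (P2_rel A r) u v"
      using sub no01 P2_10'[of x x A r] unfolding e_def incomp_def by auto
    have mx: "\<forall>z\<in>P2_carrier A - e x. \<exists>u\<in>e x. (z, u) \<in> P2_rel A r \<or> (u, z) \<in> P2_rel A r"
    proof
      fix z assume z: "z \<in> P2_carrier A - e x"
      obtain zz i where zi: "z = (zz, i)" "zz \<in> A" "i \<in> {0,1}"
        using z unfolding P2_carrier_def by auto
      show "\<exists>u\<in>e x. (z, u) \<in> P2_rel A r \<or> (u, z) \<in> P2_rel A r"
      proof (cases "(zz, x) \<in> r \<or> (x, zz) \<in> r")
        case True
        then have "(z, (x, i)) \<in> P2_rel A r \<or> ((x, i), z) \<in> P2_rel A r"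
          using zi x by (auto simp: P2_ii)
        moreover have "(x, i) \<in> e x" using zi unfolding e_def by auto
        ultimately show ?thesis by blast
      next
        case False
        then have inc: "incomp A r zz x" "incomp A r x zz"
          using zi x unfolding incomp_def by auto
        show ?thesis
        proof (cases "i = 0")
          case True
          have "(z, (x, 1)) \<in> P2_rel A r"
            unfolding zi True P2_01 using inc zi x rr by blast
          then show ?thesis unfolding e_def by blast
        next
          case False
          then have i1: "i = 1" using zi by auto
          have "((x, 0), z) \<in> P2_rel A r"
            unfolding zi i1 P2_01 using inc zi x rr by blast
          then show ?thesis unfolding e_def by blast
        qed
      qed
    qed
    show ?thesis unfolding AM2_def using sub c ac mx by blast
  qed
  have ord: "(x, y) \<in> r \<longleftrightarrow> dominated (P2_rel A r) (e x) (e y)"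
    if "x \<in> A" "y \<in> A" for x y
  proof
    assume "(x, y) \<in> r"
    then show "dominated (P2_rel A r) (e x) (e y)"
      using that unfolding dominated_def e_def by (auto simp: P2_ii)
  next
    assume "dominated (P2_rel A r) (e x) (e y)"
    then obtain v where "v \<in> e y" "((x, 1), v) \<in> P2_rel A r"
      unfolding dominated_def e_def by auto
    then show "(x, y) \<in> r" using P2_10[of x y A r] P2_10'[of x y A r] unfolding e_def by (auto simp: P2_ii)
  qed
  show ?thesis using AM ord by blast
qed

end
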